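(* Consider the following RSS-based localization setting. A stationary target is at an unknown position $\mathbf{s}=(x,y,0)\in\mathbb{R}^3$. There are $N$ UAVs; UAV $i$ ($1\le i\le N$) takes $M_i\ge 1$ measurements, the $j$-th one at position $\mathbf{u}_{i,j}=(x_{i,j},y_{i,j},h_{i,j})$. Let $r_{i,j}=\sqrt{(x-x_{i,j})^2+(y-y_{i,j})^2}$, $d_{i,j}=\sqrt{r_{i,j}^2+h_{i,j}^2}$, and let $\beta_{i,j}$ be the horizontal UAV–target angle, i.e. $(x_{i,j}-x,\,y_{i,j}-y)=r_{i,j}(\cos\beta_{i,j},\sin\beta_{i,j})$, with $\mathbf{g}_{i,j}=(\cos\beta_{i,j},\sin\beta_{i,j})^T$. The $j$-th measurement of UAV $i$ is $R_{i,j}=p_0-10\gamma\log_{10}(d_{i,j})+\eta_{i,j}$ with known $p_0$, $\gamma>0$ and independent noises $\eta_{i,j}\sim\mathcal{N}(0,\sigma_i^2)$, $\sigma_i>0$. The Fisher information matrix for $(x,y)$ is $$\mathbf{F}=\Big(\frac{10\gamma}{\ln 10}\Big)^2\sum_{i=1}^N\sum_{j=1}^{M_i}\sigma_i^{-2}\frac{r_{i,j}^2}{d_{i,j}^4}\mathbf{g}_{i,j}\mathbf{g}_{i,j}^T.$$ A configuration is feasible if $r_{i,j}\ge r_0$, $h_{i,j}\ge h_0$ for all $i,j$, and $\|\mathbf{u}_{i,j}-\mathbf{u}_{i,j-1}\|\le t_0c_{\max}$ for $2\le j\le M_i$, where $r_0,h_0,t_0>0$, $c_{\max}\ge 0$ are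 given. Problem P is to maximize $\det\mathbf{F}$ over feasible configurations. Assume the UAVs hover, i.e. $c_{\max}=0$, so $\mathbf{u}_{i,j}=\mathbf{u}_i$ (and $r_{i,j}=r_i$, $h_{i,j}=h_i$, $\mathbf{g}_{i,j}=\mathbf{g}_i$) for all $j$. Let $t$ be an index with $M_t\sigma_t^{-2}=\max\{M_i\sigma_i^{-2}:1\le i\le N\}$ and let $r^*=\max\{r_0,h_0\}$. If $M_t\sigma_t^{-2}>\frac12\sum_{i=1}^N M_i\sigma_i^{-2}$, then any configuration satisfying $r_i=r^*$ and $h_i=h_0$ for all $i$, together with $\mathbf{g}_t^T\mathbf{g}_i=0$ for all $i\ne t$, is an optimal solution of problem P.
   Context: The optimization is over UAV positions for a given target position $\mathbf{s}$. *)

theory Defs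
  imports "HOL-Analysis.Analysis"
begin

definition hdist :: "real^3 \<Rightarrow> real^3 \<Rightarrow> real" where
  "hdist s u = sqrt ((s$1 - u$1)\<^sup>2 + (s$2 - u$2)\<^sup>2)"

definition height :: "real^3 \<Rightarrow> real" where
  "height u = u$3"

definition dist3 :: "real^3 \<Rightarrow> real^3 \<Rightarrow> real" where
  "dist3 s u = sqrt ((hdist s u)\<^sup>2 + (height u)\<^sup>2)"

definition gdir :: "real^3 \<Rightarrow> real^3 \<Rightarrow> real^2" where
  "gdir s u = vector [(u$1 - s$1) / hdist s u, (u$2 - s$2) / hdist s u]"

definition outer2 :: "real^2 \<Rightarrow> real^2 \<Rightarrow> real^2^2" where
  "outer2 a b = (\<chi> k l. a$k * b$l)"

definition FIM :: "real \<Rightarrow> nat \<Rightarrow> (nat \<Rightarrow> nat) \<Rightarrow> (nat \<Rightarrow> real) \<Rightarrow> real^3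
    \<Rightarrow> (nat \<Rightarrow> nat \<Rightarrow> real^3) \<Rightarrow> real^2^2" where
  "FIM \<gamma> N M \<sigma> s u =
     ((10 * \<gamma> / ln 10)\<^sup>2) *\<^sub>R
     (\<Sum>i\<in>{1..N}. \<Sum>j\<in>{1..M i}.
        (inverse ((\<sigma> i)\<^sup>2) * (hdist s (u i j))\<^sup>2 / (dist3 s (u i j)) ^ 4)
          *\<^sub>R outer2 (gdir s (u i j)) (gdir s (u i j)))"

definition feasible :: "nat \<Rightarrow> (nat \<Rightarrow> nat) \<Rightarrow> real \<Rightarrow> real \<Rightarrow> real \<Rightarrow> real
    \<Rightarrow> real^3 \<Rightarrow> (nat \<Rightarrow> nat \<Rightarrow> real^3) \<Rightarrow> bool" where
  "feasible N M r0 h0 t0 cmax s u \<longleftrightarrow>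
     (\<forall>i\<in>{1..N}. \<forall>j\<in>{1..M i}. hdist s (u i j) \<ge> r0 \<and> height (u i j) \<ge> h0) \<and>
     (\<forall>i\<in>{1..N}. \<forall>j\<in>{2..M i}. norm (u i j - u i (j - 1)) \<le> t0 * cmax)"

end

theory Submission
  imports Defs
begin

lemma key:
  fixes I :: "nat set" and w f g1 g2 :: "nat \<Rightarrow> real" and F :: real
  assumes fin: "finite I" and tI: "t \<in> I" and w0: "\<forall>i\<in>I. w i \<ge> 0"
    and fF: "\<forall>i\<in>I. 0 \<le> f i \<and> f i \<le> F"
    and gu: "\<forall>i\<in>I. (g1 i)\<^sup>2 + (g2 i)\<^sup>2 = 1"
    and wt: "2 * w t \<ge> sum w I"
  shows "(\<Sum>i\<in>I. w i * f i * g1 i * g1 i) * (\<Sum>i\<in>I. w i * f i * g2 i * g2 i)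
       - (\<Sum>i\<in>I. w i * f i * g1 i * g2 i) * (\<Sum>i\<in>I. w i * f i * g2 i * g1 i)
       \<le> F\<^sup>2 * w t * (sum w I - w t)"
proof -
  define p where "p = g1 t"
  define q where "q = g2 t"
  have pq: "p\<^sup>2 + q\<^sup>2 = 1" using gu tI p_def q_def by auto
  define a11 where "a11 = (\<Sum>i\<in>I. w i * f i * g1 i * g1 i)"
  define a22 where "a22 = (\<Sum>i\<in>I. w i * f i * g2 i * g2 i)"
  define a12 where "a12 = (\<Sum>i\<in>I. w i * f i * g1 i * g2 i)"
  have a21: "(\<Sum>i\<in>I. w i * f i * g2 i * g1 i) = a12"
    unfolding a12_def by (rule sum.cong) auto
  define Q where "Q = (\<Sum>i\<in>I. w i * f i * (q * g1 i - p * g2 i)\<^sup>2)"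
  define P where "P = (\<Sum>i\<in>I. w i * f i * (p * g1 i + q * g2 i)\<^sup>2)"
  have Qe: "Q = q\<^sup>2 * a11 - 2 * p * q * a12 + p\<^sup>2 * a22"
  proof -
    have "Q = (\<Sum>i\<in>I. q\<^sup>2 * (w i * f i * g1 i * g1 i) - 2 * p * q * (w i * f i * g1 i * g2 i)
               + p\<^sup>2 * (w i * f i * g2 i * g2 i))"
      unfolding Q_def by (rule sum.cong) (auto simp: power2_eq_square algebra_simps)
    then show ?thesis
      by (simp add: a11_def a12_def a22_def sum.distrib sum_subtractf sum_distrib_left)
  qed
  have Pe: "P = p\<^sup>2 * a11 + 2 * p * q * a12 + q\<^sup>2 * a22"
  proof -
    have "P = (\<Sum>i\<in>I. p\<^sup>2 * (w i * f i * g1 i * g1 i) + 2 * p * q * (w i * f i * g1 i * g2 i)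
               + q\<^sup>2 * (w i * f i * g2 i * g2 i))"
      unfolding P_def by (rule sum.cong) (auto simp: power2_eq_square algebra_simps)
    then show ?thesis
      by (simp add: a11_def a12_def a22_def sum.distrib sum_distrib_left)
  qed
  have detle: "a11 * a22 - a12 * a12 \<le> Q * P"
  proof -
    have "Q * P - (a11 * a22 - a12 * a12) = (- q * p * a11 + (p\<^sup>2 - q\<^sup>2) * a12 + p * q * a22)\<^sup>2"
    proof -
      have "Q * P - (a11 * a22 - a12 * a12) * (p\<^sup>2 + q\<^sup>2)\<^sup>2 = (- q * p * a11 + (p\<^sup>2 - q\<^sup>2) * a12 + p * q * a22)\<^sup>2"
        unfolding Qe Pe by (simp add: power2_eq_square algebra_simps)
      then show ?thesis using pq by simp
    qed
    then show ?thesis by (smt (verit) zero_le_power2)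
  qed
  have PQ: "P + Q \<le> F * sum w I"
  proof -
    have "P + Q = (\<Sum>i\<in>I. w i * f i)"
      unfolding P_def Q_def sum.distrib[symmetric]
    proof (rule sum.cong)
      fix i assume i: "i \<in> I"
      have "(p * g1 i + q * g2 i)\<^sup>2 + (q * g1 i - p * g2 i)\<^sup>2 = (p\<^sup>2 + q\<^sup>2) * ((g1 i)\<^sup>2 + (g2 i)\<^sup>2)"
        by (simp add: power2_eq_square algebra_simps)
      also have "\<dots> = 1" using pq gu i by simp
      finally show "w i * f i * (p * g1 i + q * g2 i)\<^sup>2 + w i * f i * (q * g1 i - p * g2 i)\<^sup>2 = w i * f i"
        by (metis distrib_left mult.right_neutral)
    qed simp
    also have "\<dots> \<le> (\<Sum>i\<in>I. F * w i)"
      by (rule sum_mono) (use w0 fF in \<open>auto simp: mult.commute intro: mult_right_mono\<close>)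
    finally show ?thesis by (simp add: sum_distrib_left)
  qed
  have Q0: "Q \<ge> 0" unfolding Q_def using w0 fF by (auto intro!: sum_nonneg)
  have P0: "P \<ge> 0" unfolding P_def using w0 fF by (auto intro!: sum_nonneg)
  have QR: "Q \<le> F * (sum w I - w t)"
  proof -
    have "Q = w t * f t * (q * g1 t - p * g2 t)\<^sup>2 + (\<Sum>i\<in>I-{t}. w i * f i * (q * g1 i - p * g2 i)\<^sup>2)"
      unfolding Q_def using sum.remove[OF fin tI] by blast
    also have "w t * f t * (q * g1 t - p * g2 t)\<^sup>2 = 0" by (simp add: p_def q_def)
    also have "(\<Sum>i\<in>I-{t}. w i * f i * (q * g1 i - p * g2 i)\<^sup>2) \<le> (\<Sum>i\<in>I-{t}. F * w i)"
    proof (rule sum_mono)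
      fix i assume i: "i \<in> I - {t}"
      have "(p * g1 i + q * g2 i)\<^sup>2 + (q * g1 i - p * g2 i)\<^sup>2 = (p\<^sup>2 + q\<^sup>2) * ((g1 i)\<^sup>2 + (g2 i)\<^sup>2)"
        by (simp add: power2_eq_square algebra_simps)
      also have "\<dots> = 1" using pq gu i by simp
      finally have c: "(q * g1 i - p * g2 i)\<^sup>2 \<le> 1" by (smt (verit) zero_le_power2)
      have "w i * f i \<ge> 0" "w i * f i \<le> F * w i" using w0 fF i
        by (auto simp: mult.commute intro: mult_right_mono)
      then show "w i * f i * (q * g1 i - p * g2 i)\<^sup>2 \<le> F * w i"
        using c mult_left_mono[OF c \<open>w i * f i \<ge> 0\<close>] by simp
    qed
    also have "(\<Sum>i\<in>I-{t}. F * w i) = F * (sum w I - w t)"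
      by (simp add: sum_distrib_left[symmetric] sum_diff1 fin tI)
    finally show ?thesis by simp
  qed
  have F0: "F \<ge> 0" using fF tI by force
  have half: "F * (sum w I - w t) \<le> F * sum w I / 2" using wt F0
  proof -
    have "sum w I - w t \<le> sum w I / 2" using wt by simp
    from mult_left_mono[OF this F0] show ?thesis by simp
  qed
  have "Q * P \<le> Q * (F * sum w I - Q)" using PQ Q0 by (intro mult_left_mono) auto
  also have "\<dots> \<le> F * (sum w I - w t) * (F * sum w I - F * (sum w I - w t))"
  proof -
    define R where "R = F * (sum w I - w t)"
    define S where "S = F * sum w I"
    have "R * (S - R) - Q * (S - Q) = (R - Q) * (S - R - Q)" by (simp add: algebra_simps)
    moreover have "R - Q \<ge> 0" "S - R - Q \<ge> 0" using QR half by (auto simp: R_def S_def)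
    ultimately show ?thesis unfolding R_def[symmetric] S_def[symmetric] by (smt (verit) mult_nonneg_nonneg)
  qed
  also have "\<dots> = F\<^sup>2 * w t * (sum w I - w t)" by (simp add: power2_eq_square algebra_simps)
  finally show ?thesis using detle a21 unfolding a11_def a22_def a12_def by simp
qed

lemma key_eq:
  fixes I :: "nat set" and w g1 g2 :: "nat \<Rightarrow> real" and F :: real
  assumes fin: "finite I" and tI: "t \<in> I"
    and gu: "\<forall>i\<in>I. (g1 i)\<^sup>2 + (g2 i)\<^sup>2 = 1"
    and orth: "\<forall>i\<in>I. i \<noteq> t \<longrightarrow> g1 t * g1 i + g2 t * g2 i = 0"
  shows "(\<Sum>i\<in>I. w i * F * g1 i * g1 i) * (\<Sum>i\<in>I. w i * F * g2 i * g2 i)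
       - (\<Sum>i\<in>I. w i * F * g1 i * g2 i) * (\<Sum>i\<in>I. w i * F * g2 i * g1 i)
       = F\<^sup>2 * w t * (sum w I - w t)"
proof -
  define p where "p = g1 t"
  define q where "q = g2 t"
  have pq: "p\<^sup>2 + q\<^sup>2 = 1" using gu tI p_def q_def by auto
  define R where "R = (\<Sum>i\<in>I-{t}. w i)"
  have R: "R = sum w I - w t" unfolding R_def by (simp add: sum_diff1 fin tI)
  have o1: "g1 i * g1 i = q * q" "g2 i * g2 i = p * p" "g1 i * g2 i = - (p * q)" "g2 i * g1 i = - (p * q)"
    if i: "i \<in> I - {t}" for i
  proof -
    have u: "g1 i * g1 i + g2 i * g2 i = 1" using gu i by (simp add: power2_eq_square)
    have u2: "p * p + q * q = 1" using pq by (simp add: power2_eq_square)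
    have o: "p * g1 i + q * g2 i = 0" using orth i p_def q_def by auto
    have "g1 i * g1 i = g1 i * g1 i * (p * p + q * q)" using u2 by simp
    also have "\<dots> = (p * g1 i) * (p * g1 i) + q * q * (g1 i * g1 i)" by (simp add: algebra_simps)
    also have "(p * g1 i) = - (q * g2 i)" using o by simp
    also have "- (q * g2 i) * - (q * g2 i) + q * q * (g1 i * g1 i) = q * q * (g1 i * g1 i + g2 i * g2 i)"
      by (simp add: algebra_simps)
    finally show "g1 i * g1 i = q * q" using u by simp
    have "g2 i * g2 i = g2 i * g2 i * (p * p + q * q)" using u2 by simp
    also have "\<dots> = (q * g2 i) * (q * g2 i) + p * p * (g2 i * g2 i)" by (simp add: algebra_simps)
    also have "(q * g2 i) = - (p * g1 i)" using o by simp
    also have "- (p * g1 i) * - (p * g1 i) + p * p * (g2 i * g2 i) = p * p * (g1 i * g1 i + g2 i * g2 i)"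
      by (simp add: algebra_simps)
    finally show "g2 i * g2 i = p * p" using u by simp
    have "g1 i * g2 i = g1 i * g2 i * (p * p + q * q)" using u2 by simp
    also have "\<dots> = p * g2 i * (p * g1 i) + q * g1 i * (q * g2 i)" by (simp add: algebra_simps)
    also have "q * g1 i * (q * g2 i) = q * g1 i * (- (p * g1 i))" using o by (simp add: add_eq_0_iff2)
    also have "p * g2 i * (p * g1 i) + q * g1 i * (- (p * g1 i)) = p * g2 i * (- (q * g2 i)) + q * g1 i * (- (p * g1 i))"
      using o by (simp add: add_eq_0_iff2)
    also have "\<dots> = - p * q * (g2 i * g2 i + g1 i * g1 i)" by (simp add: algebra_simps)
    finally show "g1 i * g2 i = - (p * q)" using u by (simp add: algebra_simps)
    then show "g2 i * g1 i = - (p * q)" by (simp add: mult.commute)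
  qed
  have split: "(\<Sum>i\<in>I. h i) = h t + (\<Sum>i\<in>I-{t}. h i)" for h :: "nat \<Rightarrow> real"
    using sum.remove[OF fin tI] by blast
  have s11: "(\<Sum>i\<in>I. w i * F * g1 i * g1 i) = w t * F * p * p + F * R * (q * q)"
  proof -
    have "(\<Sum>i\<in>I-{t}. w i * F * g1 i * g1 i) = (\<Sum>i\<in>I-{t}. F * (q * q) * w i)"
    proof (rule sum.cong)
      fix i assume "i \<in> I - {t}"
      then have "w i * F * g1 i * g1 i = w i * F * (g1 i * g1 i)" by (simp add: mult.assoc)
      then show "w i * F * g1 i * g1 i = F * (q * q) * w i" using o1 \<open>i \<in> I - {t}\<close> by simp
    qed simp
    then show ?thesis using split[of "\<lambda>i. w i * F * g1 i * g1 i"] by (simp add: p_def R_def sum_distrib_left algebra_simps)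
  qed
  have s22: "(\<Sum>i\<in>I. w i * F * g2 i * g2 i) = w t * F * q * q + F * R * (p * p)"
  proof -
    have "(\<Sum>i\<in>I-{t}. w i * F * g2 i * g2 i) = (\<Sum>i\<in>I-{t}. F * (p * p) * w i)"
    proof (rule sum.cong)
      fix i assume "i \<in> I - {t}"
      then have "w i * F * g2 i * g2 i = w i * F * (g2 i * g2 i)" by (simp add: mult.assoc)
      then show "w i * F * g2 i * g2 i = F * (p * p) * w i" using o1 \<open>i \<in> I - {t}\<close> by simp
    qed simp
    then show ?thesis using split[of "\<lambda>i. w i * F * g2 i * g2 i"] by (simp add: q_def R_def sum_distrib_left algebra_simps)
  qed
  have s12: "(\<Sum>i\<in>I. w i * F * g1 i * g2 i) = w t * F * p * q - F * R * (p * q)"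
  proof -
    have "(\<Sum>i\<in>I-{t}. w i * F * g1 i * g2 i) = (\<Sum>i\<in>I-{t}. - (F * (p * q)) * w i)"
    proof (rule sum.cong)
      fix i assume "i \<in> I - {t}"
      then have "w i * F * g1 i * g2 i = w i * F * (g1 i * g2 i)" by (simp add: mult.assoc)
      also have "\<dots> = w i * F * (- (p * q))" using o1(3) \<open>i \<in> I - {t}\<close> by simp
      finally show "w i * F * g1 i * g2 i = - (F * (p * q)) * w i" by simp
    qed simp
    then show ?thesis using split[of "\<lambda>i. w i * F * g1 i * g2 i"] by (simp add: p_def q_def R_def sum_distrib_left sum_negf algebra_simps)
  qed
  have s21: "(\<Sum>i\<in>I. w i * F * g2 i * g1 i) = (\<Sum>i\<in>I. w i * F * g1 i * g2 i)"
    by (rule sum.cong) auto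
  have "(w t * F * p * p + F * R * (q * q)) * (w t * F * q * q + F * R * (p * p))
     - (w t * F * p * q - F * R * (p * q)) * (w t * F * p * q - F * R * (p * q))
     = F\<^sup>2 * w t * R * (p\<^sup>2 + q\<^sup>2)\<^sup>2"
    by (simp add: power2_eq_square algebra_simps)
  then show ?thesis unfolding s21 s11 s22 s12 R[symmetric] using pq by simp
qed

lemma hover:
  assumes "feasible N M r0 h0 t0 0 s u" "i \<in> {1..N}"
  shows "\<forall>j\<in>{1..M i}. u i j = u i 1"
proof
  fix j assume "j \<in> {1..M i}"
  then show "u i j = u i 1"
  proof (induction j)
    case 0 then show ?case by simp
  next
    case (Suc j)
    show ?case
    proof (cases "j = 0")
      case True then show ?thesis by simp
    next
      case False
      have "Suc j \<in> {2..M i}" using Suc.prems False by auto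
      then have "norm (u i (Suc j) - u i j) \<le> 0"
        using assms unfolding feasible_def by fastforce
      then have "u i (Suc j) = u i j" by simp
      moreover have "u i j = u i 1" using Suc False by auto
      ultimately show ?thesis by simp
    qed
  qed
qed

lemma fim_comp:
  assumes "\<forall>i\<in>{1..N}. \<forall>j\<in>{1..M i}. u i j = u i 1"
  shows "FIM \<gamma> N M \<sigma> s u $ k $ l = (10 * \<gamma> / ln 10)\<^sup>2 *
     (\<Sum>i\<in>{1..N}. (real (M i) / (\<sigma> i)\<^sup>2) * ((hdist s (u i 1))\<^sup>2 / (dist3 s (u i 1)) ^ 4)
        * gdir s (u i 1) $ k * gdir s (u i 1) $ l)"
proof -
  have e0: "FIM \<gamma> N M \<sigma> s u $ k $ l = (10 * \<gamma> / ln 10)\<^sup>2 *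
     (\<Sum>i\<in>{1..N}. \<Sum>j\<in>{1..M i}. inverse ((\<sigma> i)\<^sup>2) * (hdist s (u i j))\<^sup>2 / dist3 s (u i j) ^ 4 *
          (gdir s (u i j) $ k * gdir s (u i j) $ l))"
    unfolding FIM_def outer2_def
    by (simp only: vector_scaleR_component sum_component vec_lambda_beta real_scaleR_def)
  have e1: "(\<Sum>j\<in>{1..M i}. inverse ((\<sigma> i)\<^sup>2) * (hdist s (u i j))\<^sup>2 / dist3 s (u i j) ^ 4 *
          (gdir s (u i j) $ k * gdir s (u i j) $ l))
      = real (M i) / (\<sigma> i)\<^sup>2 * ((hdist s (u i 1))\<^sup>2 / dist3 s (u i 1) ^ 4) *
        gdir s (u i 1) $ k * gdir s (u i 1) $ l" if i: "i \<in> {1..N}" for i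
  proof -
    have "(\<Sum>j\<in>{1..M i}. inverse ((\<sigma> i)\<^sup>2) * (hdist s (u i j))\<^sup>2 / dist3 s (u i j) ^ 4 *
            (gdir s (u i j) $ k * gdir s (u i j) $ l))
        = (\<Sum>j\<in>{1..M i}. inverse ((\<sigma> i)\<^sup>2) * (hdist s (u i 1))\<^sup>2 / dist3 s (u i 1) ^ 4 *
            (gdir s (u i 1) $ k * gdir s (u i 1) $ l))"
    proof (rule sum.cong)
      fix j assume j: "j \<in> {1..M i}"
      have "u i j = u i 1" using assms i j by blast
      then show "inverse ((\<sigma> i)\<^sup>2) * (hdist s (u i j))\<^sup>2 / dist3 s (u i j) ^ 4 *
            (gdir s (u i j) $ k * gdir s (u i j) $ l) = inverse ((\<sigma> i)\<^sup>2) * (hdist s (u i 1))\<^sup>2 / dist3 s (u i 1) ^ 4 *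
            (gdir s (u i 1) $ k * gdir s (u i 1) $ l)" by (simp only:)
    qed (rule refl)
    also have "\<dots> = real (M i) * (inverse ((\<sigma> i)\<^sup>2) * (hdist s (u i 1))\<^sup>2 / dist3 s (u i 1) ^ 4 *
            (gdir s (u i 1) $ k * gdir s (u i 1) $ l))"
      by simp
    also have "\<dots> = real (M i) / (\<sigma> i)\<^sup>2 * ((hdist s (u i 1))\<^sup>2 / dist3 s (u i 1) ^ 4) *
        gdir s (u i 1) $ k * gdir s (u i 1) $ l"
      by (simp add: divide_inverse mult.assoc mult.left_commute)
    finally show ?thesis .
  qed
  show ?thesis unfolding e0
    by (rule arg_cong[where f="\<lambda>x. (10 * \<gamma> / ln 10)\<^sup>2 * x"], rule sum.cong, rule refl, rule e1)
qed

lemma dist3_4: "dist3 s u ^ 4 = ((hdist s u)\<^sup>2 + (height u)\<^sup>2)\<^sup>2"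
proof -
  have "dist3 s u ^ 4 = ((dist3 s u)\<^sup>2)\<^sup>2" by simp
  also have "(dist3 s u)\<^sup>2 = (hdist s u)\<^sup>2 + (height u)\<^sup>2" unfolding dist3_def by simp
  finally show ?thesis .
qed

lemma gdir_unit:
  assumes "hdist s u > 0"
  shows "(gdir s u $ 1)\<^sup>2 + (gdir s u $ 2)\<^sup>2 = 1"
proof -
  have h: "(hdist s u)\<^sup>2 = (s$1 - u$1)\<^sup>2 + (s$2 - u$2)\<^sup>2" unfolding hdist_def by simp
  have "(gdir s u $ 1)\<^sup>2 + (gdir s u $ 2)\<^sup>2 = ((u$1 - s$1)\<^sup>2 + (u$2 - s$2)\<^sup>2) / (hdist s u)\<^sup>2"
    unfolding gdir_def by (simp add: power_divide add_divide_distrib)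
  also have "(u$1 - s$1)\<^sup>2 + (u$2 - s$2)\<^sup>2 = (hdist s u)\<^sup>2" unfolding h by (simp add: power2_commute)
  finally show ?thesis using assms by simp
qed

lemma f_bound:
  fixes r h r0 h0 :: real
  assumes "r0 > 0" "h0 > 0" "r \<ge> r0" "h \<ge> h0"
  shows "r\<^sup>2 / (r\<^sup>2 + h\<^sup>2)\<^sup>2 \<le> (max r0 h0)\<^sup>2 / ((max r0 h0)\<^sup>2 + h0\<^sup>2)\<^sup>2"
proof -
  define x where "x = r\<^sup>2"
  define X where "X = (max r0 h0)\<^sup>2"
  define a where "a = h0\<^sup>2"
  have a0: "a > 0" using assms by (simp add: a_def)
  have x0: "x \<ge> r0\<^sup>2" using assms unfolding x_def by (simp add: power_mono)
  have "h\<^sup>2 \<ge> a" using assms unfolding a_def by (simp add: power_mono)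
  then have "(x + a)\<^sup>2 \<le> (x + h\<^sup>2)\<^sup>2" using a0 unfolding x_def
    by (intro power_mono) auto
  then have 1: "x / (x + h\<^sup>2)\<^sup>2 \<le> x / (x + a)\<^sup>2" using a0 x_def
  proof -
    have "x + a > 0" using a0 unfolding x_def by (simp add: add_nonneg_pos)
    moreover have "x \<ge> 0" unfolding x_def by simp
    moreover have "x + h\<^sup>2 > 0" using \<open>x + a > 0\<close> \<open>h\<^sup>2 \<ge> a\<close> by linarith
    ultimately show ?thesis using \<open>(x + a)\<^sup>2 \<le> (x + h\<^sup>2)\<^sup>2\<close>
      by (intro divide_left_mono) (auto simp: x_def[symmetric] intro!: mult_pos_pos)
  qed
  have key: "(x - X) * (a\<^sup>2 - x * X) \<le> 0"
  proof (cases "r0 \<ge> h0")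
    case True
    then have X: "X = r0\<^sup>2" unfolding X_def by simp
    have "x * X \<ge> r0\<^sup>2 * r0\<^sup>2" unfolding X using mult_right_mono[OF x0, of "r0\<^sup>2"] by simp
    moreover have "r0\<^sup>2 * r0\<^sup>2 \<ge> a\<^sup>2" unfolding a_def using True assms
      by (metis power2_eq_square power_mono less_le_not_le mult_mono zero_le_power2 order.strict_implies_order)
    ultimately show ?thesis using x0 X by (intro mult_nonneg_nonpos) auto
  next
    case False
    then have X: "X = a" unfolding X_def a_def by simp
    have "(x - X) * (a\<^sup>2 - x * X) = - a * (x - a)\<^sup>2" unfolding X by (simp add: power2_eq_square algebra_simps)
    then show ?thesis using a0 by simp
  qed
  have X0: "X > 0" unfolding X_def using assms by simp
  have 2: "x / (x + a)\<^sup>2 \<le> X / (X + a)\<^sup>2"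
  proof -
    have "x * (X + a)\<^sup>2 - X * (x + a)\<^sup>2 = (x - X) * (a\<^sup>2 - x * X)" by (simp add: power2_eq_square algebra_simps)
    then have "x * (X + a)\<^sup>2 \<le> X * (x + a)\<^sup>2" using key by simp
    moreover have "x \<ge> 0" unfolding x_def by simp
    then have "x + a > 0" "X + a > 0" using a0 X0 by linarith+
    then have "(x + a)\<^sup>2 > 0" "(X + a)\<^sup>2 > 0" by simp_all
    ultimately show ?thesis by (simp add: divide_simps)
  qed
  show ?thesis using 1 2 unfolding x_def X_def a_def by linarith
qed

theorem theorem4:
  fixes N :: nat and M :: "nat \<Rightarrow> nat" and \<sigma> :: "nat \<Rightarrow> real"
    and \<gamma> r0 h0 t0 :: real and s :: "real^3" and t :: nat
    and v :: "nat \<Rightarrow> real^3"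
  assumes "\<forall>i\<in>{1..N}. M i \<ge> 1"
    and "\<forall>i\<in>{1..N}. \<sigma> i > 0"
    and "\<gamma> > 0" and "r0 > 0" and "h0 > 0" and "t0 > 0"
    and "s$3 = 0"
    and "t \<in> {1..N}"
    and "\<forall>i\<in>{1..N}. real (M i) / (\<sigma> i)\<^sup>2 \<le> real (M t) / (\<sigma> t)\<^sup>2"
    and "real (M t) / (\<sigma> t)\<^sup>2 > (1/2) * (\<Sum>i\<in>{1..N}. real (M i) / (\<sigma> i)\<^sup>2)"
    and "\<forall>i\<in>{1..N}. hdist s (v i) = max r0 h0"
    and "\<forall>i\<in>{1..N}. height (v i) = h0"
    and "\<forall>i\<in>{1..N}. i \<noteq> t \<longrightarrow> gdir s (v t) \<bullet> gdir s (v i) = 0"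
  shows "feasible N M r0 h0 t0 0 s (\<lambda>i j. v i) \<and>
         (\<forall>u. feasible N M r0 h0 t0 0 s u \<longrightarrow>
              det (FIM \<gamma> N M \<sigma> s u) \<le> det (FIM \<gamma> N M \<sigma> s (\<lambda>i j. v i)))"
proof -
  note A = assms
  define K where "K = (10 * \<gamma> / ln 10)\<^sup>2"
  define w where "w i = real (M i) / (\<sigma> i)\<^sup>2" for i
  define F where "F = (max r0 h0)\<^sup>2 / ((max r0 h0)\<^sup>2 + h0\<^sup>2)\<^sup>2"
  define I where "I = {1..N}"
  have fin: "finite I" unfolding I_def by simp
  have tI: "t \<in> I" using A(8) unfolding I_def .
  have w0: "\<forall>i\<in>I. w i \<ge> 0" unfolding w_def by auto
  have "(1/2) * sum w I < w t" using A(10) unfolding w_def I_def by simp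
  then have wt: "2 * w t \<ge> sum w I" by linarith
  have alg: "(k::real) * a * (k * b) - k * c * (k * d) = k\<^sup>2 * (a * b - c * d)" for k a b c d
    by (simp add: power2_eq_square algebra_simps)
  have detform: "det (FIM \<gamma> N M \<sigma> s u) = K\<^sup>2 *
      ((\<Sum>i\<in>I. w i * ((hdist s (u i 1))\<^sup>2 / (dist3 s (u i 1)) ^ 4) * gdir s (u i 1) $ 1 * gdir s (u i 1) $ 1) *
       (\<Sum>i\<in>I. w i * ((hdist s (u i 1))\<^sup>2 / (dist3 s (u i 1)) ^ 4) * gdir s (u i 1) $ 2 * gdir s (u i 1) $ 2) -
       (\<Sum>i\<in>I. w i * ((hdist s (u i 1))\<^sup>2 / (dist3 s (u i 1)) ^ 4) * gdir s (u i 1) $ 1 * gdir s (u i 1) $ 2) *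
       (\<Sum>i\<in>I. w i * ((hdist s (u i 1))\<^sup>2 / (dist3 s (u i 1)) ^ 4) * gdir s (u i 1) $ 2 * gdir s (u i 1) $ 1))"
    if h: "\<forall>i\<in>{1..N}. \<forall>j\<in>{1..M i}. u i j = u i 1" for u
    unfolding det_2 fim_comp[OF h] K_def[symmetric] w_def I_def by (rule alg)
  have feas: "feasible N M r0 h0 t0 0 s (\<lambda>i j. v i)"
    unfolding feasible_def using A(11,12) by auto
  have hv: "\<forall>i\<in>{1..N}. \<forall>j\<in>{1..M i}. (\<lambda>i j. v i) i j = (\<lambda>i j. v i) i 1" by simp
  have fv: "w i * ((hdist s (v i))\<^sup>2 / (dist3 s (v i)) ^ 4) = w i * F" if "i \<in> I" for i
    using that A(11,12) unfolding dist3_4 F_def I_def by simp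
  have pos: "max r0 h0 > 0" using A(4) by simp
  have detv: "det (FIM \<gamma> N M \<sigma> s (\<lambda>i j. v i)) = K\<^sup>2 * (F\<^sup>2 * w t * (sum w I - w t))"
  proof -
    have e: "(\<Sum>i\<in>I. w i * ((hdist s (v i))\<^sup>2 / (dist3 s (v i)) ^ 4) * gdir s (v i) $ k * gdir s (v i) $ l)
         = (\<Sum>i\<in>I. w i * F * gdir s (v i) $ k * gdir s (v i) $ l)" for k l
      by (rule sum.cong) (simp_all only: fv)
    have "det (FIM \<gamma> N M \<sigma> s (\<lambda>i j. v i)) = K\<^sup>2 *
      ((\<Sum>i\<in>I. w i * F * gdir s (v i) $ 1 * gdir s (v i) $ 1) *
       (\<Sum>i\<in>I. w i * F * gdir s (v i) $ 2 * gdir s (v i) $ 2) -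
       (\<Sum>i\<in>I. w i * F * gdir s (v i) $ 1 * gdir s (v i) $ 2) *
       (\<Sum>i\<in>I. w i * F * gdir s (v i) $ 2 * gdir s (v i) $ 1))"
      using detform[OF hv] unfolding e by simp
    also have "\<dots> = K\<^sup>2 * (F\<^sup>2 * w t * (sum w I - w t))"
    proof (subst key_eq[OF fin tI])
      show "\<forall>i\<in>I. (gdir s (v i) $ 1)\<^sup>2 + (gdir s (v i) $ 2)\<^sup>2 = 1"
        using A(11) pos unfolding I_def by (auto intro!: gdir_unit)
      show "\<forall>i\<in>I. i \<noteq> t \<longrightarrow> gdir s (v t) $ 1 * gdir s (v i) $ 1 + gdir s (v t) $ 2 * gdir s (v i) $ 2 = 0"
        using A(13) unfolding I_def inner_vec_def sum_2 by simp
    qed simp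
    finally show ?thesis .
  qed
  have G: "det (FIM \<gamma> N M \<sigma> s u) \<le> det (FIM \<gamma> N M \<sigma> s (\<lambda>i j. v i))"
    if fu: "feasible N M r0 h0 t0 0 s u" for u
  proof -
    have hu: "\<forall>i\<in>{1..N}. \<forall>j\<in>{1..M i}. u i j = u i 1" using hover[OF fu] by blast
    have bnd: "hdist s (u i 1) \<ge> r0 \<and> height (u i 1) \<ge> h0" if "i \<in> I" for i
      using fu that A(1) unfolding feasible_def I_def by auto
    have "det (FIM \<gamma> N M \<sigma> s u) = K\<^sup>2 *
      ((\<Sum>i\<in>I. w i * ((hdist s (u i 1))\<^sup>2 / (dist3 s (u i 1)) ^ 4) * gdir s (u i 1) $ 1 * gdir s (u i 1) $ 1) *
       (\<Sum>i\<in>I. w i * ((hdist s (u i 1))\<^sup>2 / (dist3 s (u i 1)) ^ 4) * gdir s (u i 1) $ 2 * gdir s (u i 1) $ 2) -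
       (\<Sum>i\<in>I. w i * ((hdist s (u i 1))\<^sup>2 / (dist3 s (u i 1)) ^ 4) * gdir s (u i 1) $ 1 * gdir s (u i 1) $ 2) *
       (\<Sum>i\<in>I. w i * ((hdist s (u i 1))\<^sup>2 / (dist3 s (u i 1)) ^ 4) * gdir s (u i 1) $ 2 * gdir s (u i 1) $ 1))"
      using detform[OF hu] .
    also have "\<dots> \<le> K\<^sup>2 * (F\<^sup>2 * w t * (sum w I - w t))"
    proof (rule mult_left_mono[OF key[OF fin tI w0 _ _ wt]])
      show "\<forall>i\<in>I. 0 \<le> (hdist s (u i 1))\<^sup>2 / (dist3 s (u i 1)) ^ 4 \<and> (hdist s (u i 1))\<^sup>2 / (dist3 s (u i 1)) ^ 4 \<le> F"
      proof
        fix i assume i: "i \<in> I"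
        show "0 \<le> (hdist s (u i 1))\<^sup>2 / (dist3 s (u i 1)) ^ 4 \<and> (hdist s (u i 1))\<^sup>2 / (dist3 s (u i 1)) ^ 4 \<le> F"
          unfolding dist3_4 F_def using f_bound[of r0 h0 "hdist s (u i 1)" "height (u i 1)"] bnd[OF i] A(4,5) by simp
      qed
      show "\<forall>i\<in>I. (gdir s (u i 1) $ 1)\<^sup>2 + (gdir s (u i 1) $ 2)\<^sup>2 = 1"
      proof
        fix i assume i: "i \<in> I"
        show "(gdir s (u i 1) $ 1)\<^sup>2 + (gdir s (u i 1) $ 2)\<^sup>2 = 1"
          using bnd[OF i] A(4) by (intro gdir_unit) linarith
      qed
    qed simp
    also have "\<dots> = det (FIM \<gamma> N M \<sigma> s (\<lambda>i j. v i))" using detv by simp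
    finally show ?thesis .
  qed
  show ?thesis
    by (intro conjI allI impI feas) (rule G)
qed

end
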